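(* Consider the batched co-player shaping POMDP described in the context, with ego agent $i$ using the factorized policy with shared parameters $\phi^i$, and let $$\bar J(\phi^i)=\mathbb{E}_{\bar P^{\phi^i}}\Big[\tfrac1B\sum_{b=1}^B\sum_{l=1}^{MT}R^{i,b}_l\Big],$$ where $\bar P^{\phi^i}$ is the distribution over batched long trajectories induced by the environment dynamics $\bar P_t$, the initial state distribution $\bar P_i$ and the policy with parameters $\phi^i$. Then $$\nabla_{\phi^i}\bar J(\phi^i)=\mathbb{E}_{\bar P^{\phi^i}}\Bigg[\sum_{b=1}^B\sum_{l=1}^{MT}\nabla_{\phi^i}\log\pi^i(a^{i,b}_l\mid h^{i,b}_l;\phi^i)\Big(\frac1B\sum_{l'=l}^{m_lT}R^{i,b}_{l'}+\frac1B\sum_{b'=1}^B\sum_{l'=m_lT+1}^{MT}R^{i,b'}_{l'}\Big)\Bigg],$$ where $m_l=\lceil l/T\rceil$ is the index of the inner episode containing long time step $l$.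
   Context: A partially observable stochastic game (POSG) is played between an ego agent $i$ and co-players $-i$, each with parameterized policies; rewards are bounded and all state, action, observation and reward spaces are finite. The batched co-player shaping POMDP (from the viewpoint of agent $i$) is defined as follows. There are $M$ consecutive inner episodes, each of $T$ time steps of the POSG, so the long time index runs over $l=1,\dots,MT$; inner episode $m\in\{1,\dots,M\}$ covers steps $(m-1)T+1,\dots,mT$. In every inner episode, $B$ copies (indexed by $b=1,\dots,B$) of the POSG are played in parallel, with the co-players using their current parameters $\phi^{-i}_m$. The hidden state consists of the $B$ environment states together with the co-players' current parameters. At each inner-episode boundary all $B$ environments are reset, and the co-players (naive learners) update their parameters by a fixed (possibly stochastic) learning rule whose input is the batch of the $B$ histories of the inner episode just completed; the initial state distribution $\bar P_i$ initializes the co-player parameters and the first batch of environments. Consequently, within an inner episode, the $B$ parallel trajectories evolve conditionally independently given the co-player parameters, and an action in trajectory $b$ can affect trajectory $b'\neq b$ only through the co-player parameter updates at subsequent inner-episode boundaries. The ego agent's long history $h^{i,b}_l$ in copy $b$ consists of all its observations (which may include past actions) from step $1$ up to step $l$, spanning across inner episodes. The ego agent's joint policy over the batched action $\bar a^i_l=\{a^{i,b}_l\}_{b=1}^B$ factorizes as $\bar\pi^i(\bar a^i_l\mid\bar h^i_l;\phi^i)=\prod_{b=1}^B\pi^i(a^{i,b}_l\mid h^{i,b}_l;\phi^i)$ with shared parameters $\phi^i$, and $\pi^i$ is differentiable in $\phi^i$. $R^{i,b}_l$ denotes agent $i$'s reward at long step $l$ in copy $b$. *)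

theory Defs
  imports "HOL-Analysis.Analysis" "HOL-Probability.Probability_Mass_Function"
begin

text \<open>
Batched co-player shaping POMDP, indices 0-based.
  B copies (b < B), M inner episodes (m < M), T steps per episode (t < T).
  Long step index l = m*T + t, with l < M*T; its inner episode is l div T.
A batched long trajectory is a triple (cs, ss, as):
  cs m        co-player parameters used in inner episode m           (m < M)
  ss b m t    environment state of copy b in episode m at step t     (t \<le> T; t = T is the
              state reached after the last step of the episode, before the reset)
  as b m t    ego action of copy b in episode m at step t            (t < T)
Model components:
  initC       initial distribution of co-player parameters
  reset c     distribution of a (re)set environment state, given co-player parameters c;
              each copy is reset independently at each inner-episode start
  K c s a     environment transition (co-players acting with parameters c; their
              within-episode information is part of the finite state s)
  U c D       co-player learning rule: new parameters from old parameters c and the batch D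
              of the B histories of the inner episode just completed
  obs s       ego observation of state s
  rew s a s'  ego reward
  pol p h     ego policy (distribution over ego actions) with parameters p given ego long history h
\<close>

type_synonym ('c,'s,'a) btraj =
  "(nat \<Rightarrow> 'c) \<times> (nat \<Rightarrow> nat \<Rightarrow> nat \<Rightarrow> 's) \<times> (nat \<Rightarrow> nat \<Rightarrow> nat \<Rightarrow> 'a)"

definition btrajs :: "nat \<Rightarrow> nat \<Rightarrow> nat \<Rightarrow> ('c,'s,'a) btraj set" where
  "btrajs B M T =
     (Pi\<^sub>E {..<M} (\<lambda>_. UNIV)) \<times>
     (Pi\<^sub>E {..<B} (\<lambda>_. Pi\<^sub>E {..<M} (\<lambda>_. Pi\<^sub>E {..T} (\<lambda>_. UNIV)))) \<times>
     (Pi\<^sub>E {..<B} (\<lambda>_. Pi\<^sub>E {..<M} (\<lambda>_. Pi\<^sub>E {..<T} (\<lambda>_. UNIV))))"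

definition ego_hist :: "nat \<Rightarrow> ('s \<Rightarrow> 'o) \<Rightarrow> (nat \<Rightarrow> nat \<Rightarrow> nat \<Rightarrow> 's) \<Rightarrow> nat \<Rightarrow> nat \<Rightarrow> 'o list" where
  "ego_hist T obs ss b l = map (\<lambda>k. obs (ss b (k div T) (k mod T))) [0..<Suc l]"

definition ego_act :: "nat \<Rightarrow> (nat \<Rightarrow> nat \<Rightarrow> nat \<Rightarrow> 'a) \<Rightarrow> nat \<Rightarrow> nat \<Rightarrow> 'a" where
  "ego_act T as b l = as b (l div T) (l mod T)"

definition long_rew :: "nat \<Rightarrow> ('s \<Rightarrow> 'a \<Rightarrow> 's \<Rightarrow> real) \<Rightarrow> (nat \<Rightarrow> nat \<Rightarrow> nat \<Rightarrow> 's)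
    \<Rightarrow> (nat \<Rightarrow> nat \<Rightarrow> nat \<Rightarrow> 'a) \<Rightarrow> nat \<Rightarrow> nat \<Rightarrow> real" where
  "long_rew T rew ss as b l =
     rew (ss b (l div T) (l mod T)) (as b (l div T) (l mod T)) (ss b (l div T) (Suc (l mod T)))"

definition batch_data :: "nat \<Rightarrow> nat \<Rightarrow> (nat \<Rightarrow> nat \<Rightarrow> nat \<Rightarrow> 's) \<Rightarrow> (nat \<Rightarrow> nat \<Rightarrow> nat \<Rightarrow> 'a)
    \<Rightarrow> nat \<Rightarrow> ('s list \<times> 'a list) list" where
  "batch_data B T ss as m = map (\<lambda>b. (map (ss b m) [0..<Suc T], map (as b m) [0..<T])) [0..<B]"

definition traj_prob ::
  "nat \<Rightarrow> nat \<Rightarrow> nat \<Rightarrow> 'c pmf \<Rightarrow> ('c \<Rightarrow> ('s list \<times> 'a list) list \<Rightarrow> 'c pmf) \<Rightarrow> ('c \<Rightarrow> 's pmf)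
   \<Rightarrow> ('c \<Rightarrow> 's \<Rightarrow> 'a \<Rightarrow> 's pmf) \<Rightarrow> ('s \<Rightarrow> 'o) \<Rightarrow> ('p \<Rightarrow> 'o list \<Rightarrow> 'a pmf) \<Rightarrow> 'p
   \<Rightarrow> ('c,'s,'a) btraj \<Rightarrow> real" where
  "traj_prob B M T initC U reset K obs pol p \<tau> = (case \<tau> of (cs, ss, as) \<Rightarrow>
     pmf initC (cs 0) *
     (\<Prod>m\<in>{1..<M}. pmf (U (cs (m - 1)) (batch_data B T ss as (m - 1))) (cs m)) *
     (\<Prod>b<B. \<Prod>m<M. pmf (reset (cs m)) (ss b m 0) *
        (\<Prod>t<T. pmf (pol p (ego_hist T obs ss b (m * T + t))) (as b m t) *
                 pmf (K (cs m) (ss b m t) (as b m t)) (ss b m (Suc t)))))"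

definition Jbar ::
  "nat \<Rightarrow> nat \<Rightarrow> nat \<Rightarrow> 'c pmf \<Rightarrow> ('c \<Rightarrow> ('s list \<times> 'a list) list \<Rightarrow> 'c pmf) \<Rightarrow> ('c \<Rightarrow> 's pmf)
   \<Rightarrow> ('c \<Rightarrow> 's \<Rightarrow> 'a \<Rightarrow> 's pmf) \<Rightarrow> ('s \<Rightarrow> 'o) \<Rightarrow> ('s \<Rightarrow> 'a \<Rightarrow> 's \<Rightarrow> real)
   \<Rightarrow> ('p \<Rightarrow> 'o list \<Rightarrow> 'a pmf) \<Rightarrow> 'p \<Rightarrow> real" where
  "Jbar B M T initC U reset K obs rew pol p =
     (\<Sum>\<tau>\<in>btrajs B M T. traj_prob B M T initC U reset K obs pol p \<tau> *
        (case \<tau> of (cs, ss, as) \<Rightarrow>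
           (1 / real B) * (\<Sum>b<B. \<Sum>l<M * T. long_rew T rew ss as b l)))"

end

theory Submission
  imports Defs
begin


datatype rkey = RK nat nat nat nat

instantiation rkey :: linorder
begin
fun less_eq_rkey :: "rkey \<Rightarrow> rkey \<Rightarrow> bool" where
  "less_eq_rkey (RK a b c d) (RK a' b' c' d') = (a < a' \<or> a = a' \<and> (b < b' \<or> b = b' \<and> (c < c' \<or> c = c' \<and> d \<le> d')))"
fun less_rkey :: "rkey \<Rightarrow> rkey \<Rightarrow> bool" where
  "less_rkey (RK a b c d) (RK a' b' c' d') = (a < a' \<or> a = a' \<and> (b < b' \<or> b = b' \<and> (c < c' \<or> c = c' \<and> d < d')))"
instance
proof
  fix x y z :: rkey
  show "(x < y) = (x \<le> y \<and> \<not> y \<le> x)" by (cases x; cases y) auto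
  show "x \<le> x" by (cases x) auto
  show "x \<le> y \<Longrightarrow> y \<le> z \<Longrightarrow> x \<le> z" by (cases x; cases y; cases z) auto
  show "x \<le> y \<Longrightarrow> y \<le> x \<Longrightarrow> x = y" by (cases x; cases y) auto
  show "x \<le> y \<or> y \<le> x" by (cases x; cases y) auto
qed
end

lemma sum_PiE_insert:
  assumes "k \<notin> S"
  shows "(\<Sum>x\<in>Pi\<^sub>E (insert k S) D. G x) = (\<Sum>x\<in>Pi\<^sub>E S D. \<Sum>w\<in>D k. G (x(k:=w)))"
proof -
  have "(\<Sum>x\<in>Pi\<^sub>E (insert k S) D. G x) = (\<Sum>p\<in>D k \<times> Pi\<^sub>E S D. G ((\<lambda>(y, g). g(k := y)) p))"
    unfolding PiE_insert_eq by (rule sum.reindex[OF inj_combinator[OF assms], unfolded comp_def])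
  also have "\<dots> = (\<Sum>w\<in>D k. \<Sum>x\<in>Pi\<^sub>E S D. G (x(k:=w)))"
    by (simp add: sum.cartesian_product split_def)
  also have "\<dots> = (\<Sum>x\<in>Pi\<^sub>E S D. \<Sum>w\<in>D k. G (x(k:=w)))"
    by (rule sum.swap)
  finally show ?thesis .
qed

lemma marg:
  fixes r :: "'v \<Rightarrow> 'r::linorder"
  assumes fin: "finite F" and disj: "A \<inter> F = {}" and inj: "inj_on r F"
    and Gd: "\<And>x v w. v \<in> F \<Longrightarrow> G (x(v:=w)) = G x"
    and fd: "\<And>x u v w. u \<in> F \<Longrightarrow> v \<in> F \<Longrightarrow> r u < r v \<Longrightarrow> f u (x(v:=w)) = f u x"
    and norm: "\<And>x v. v \<in> F \<Longrightarrow> (\<Sum>w\<in>D v. f v (x(v:=w))) = (1::real)"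
  shows "(\<Sum>x\<in>Pi\<^sub>E (A \<union> F) D. G x * (\<Prod>v\<in>F. f v x)) = (\<Sum>x\<in>Pi\<^sub>E A D. G x)"
proof -
  have "finite F' \<Longrightarrow> F' \<subseteq> F \<Longrightarrow> (\<Sum>x\<in>Pi\<^sub>E (A \<union> F') D. G x * (\<Prod>v\<in>F'. f v x)) = (\<Sum>x\<in>Pi\<^sub>E A D. G x)" for F'
  proof (induction F' rule: finite_ranking_induct[where f = r])
    case empty then show ?case by simp
  next
    case (insert k S)
    note 3 = insert
    show ?case
    proof (cases "k \<in> S")
      case True then show ?thesis using 3 by (simp add: insert_absorb)
    next
      case False
      have kF: "k \<in> F" and SF: "S \<subseteq> F" using 3 by auto
      have kA: "k \<notin> A \<union> S" using disj kF False by auto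
      have lt: "r u < r k" if "u \<in> S" for u
        using 3(2)[OF that] inj kF SF that False by (metis inj_onD order_le_less subsetD)
      have "(\<Sum>x\<in>Pi\<^sub>E (A \<union> insert k S) D. G x * (\<Prod>v\<in>insert k S. f v x))
          = (\<Sum>x\<in>Pi\<^sub>E (A \<union> S) D. \<Sum>w\<in>D k. G (x(k:=w)) * (\<Prod>v\<in>insert k S. f v (x(k:=w))))"
        using sum_PiE_insert[OF kA] by simp
      also have "\<dots> = (\<Sum>x\<in>Pi\<^sub>E (A \<union> S) D. G x * (\<Prod>v\<in>S. f v x) * (\<Sum>w\<in>D k. f k (x(k:=w))))"
      proof (rule sum.cong[OF refl])
        fix x
        have "(\<Prod>v\<in>insert k S. f v (x(k:=w))) = f k (x(k:=w)) * (\<Prod>v\<in>S. f v x)" for w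
        proof -
          have "finite S" using 3 by simp
          then have "(\<Prod>v\<in>insert k S. f v (x(k:=w))) = f k (x(k:=w)) * (\<Prod>v\<in>S. f v (x(k:=w)))"
            using False by simp
          also have "(\<Prod>v\<in>S. f v (x(k:=w))) = (\<Prod>v\<in>S. f v x)"
            using fd lt kF SF by (intro prod.cong) auto
          finally show ?thesis .
        qed
        then show "(\<Sum>w\<in>D k. G (x(k:=w)) * (\<Prod>v\<in>insert k S. f v (x(k:=w))))
            = G x * (\<Prod>v\<in>S. f v x) * (\<Sum>w\<in>D k. f k (x(k:=w)))"
          using Gd[OF kF] by (simp add: sum_distrib_left mult_ac)
      qed
      also have "\<dots> = (\<Sum>x\<in>Pi\<^sub>E (A \<union> S) D. G x * (\<Prod>v\<in>S. f v x))"
        using norm[OF kF] by simp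
      also have "\<dots> = (\<Sum>x\<in>Pi\<^sub>E A D. G x)" using 3 by auto
      finally show ?thesis .
    qed
  qed
  then show ?thesis using fin by simp
qed

lemma zero_lemma:
  fixes r :: "'v \<Rightarrow> 'r::linorder"
  assumes fin: "finite V" and kV: "k \<in> V" and inj: "inj_on r V"
    and fd: "\<And>x u v w. u \<in> V \<Longrightarrow> v \<in> V \<Longrightarrow> r u < r v \<Longrightarrow> f u (x(v:=w)) = f u x"
    and norm: "\<And>x v. v \<in> V \<Longrightarrow> r k < r v \<Longrightarrow> (\<Sum>w\<in>D v. f v (x(v:=w))) = (1::real)"
    and gd: "\<And>x v w. v \<in> V \<Longrightarrow> r k \<le> r v \<Longrightarrow> g (x(v:=w)) = g x"
    and hd: "\<And>x v w. v \<in> V \<Longrightarrow> r k < r v \<Longrightarrow> h (x(v:=w)) = h x"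
    and hz: "\<And>x. (\<Sum>w\<in>D k. h (x(k:=w))) = 0"
  shows "(\<Sum>x\<in>Pi\<^sub>E V D. g x * h x * (\<Prod>v\<in>V-{k}. f v x)) = 0"
proof -
  define P where "P = {v\<in>V. r v < r k}"
  define F where "F = {v\<in>V. r k < r v}"
  have eqk: "v = k" if "v \<in> V" "r v = r k" for v using inj that kV by (auto dest: inj_onD)
  have lt3: "r v < r k" if "v\<in>V" "v\<noteq>k" "\<not> r k < r v" for v
  proof -
    from that have "r v \<le> r k" by simp
    moreover have "r v \<noteq> r k" using eqk that by blast
    ultimately show ?thesis by simp
  qed
  have V: "V = insert k P \<union> F" using kV lt3 unfolding P_def F_def by auto
  have Vk: "V - {k} = P \<union> F" using kV lt3 eqk unfolding P_def F_def by auto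
  have PF: "P \<inter> F = {}" "insert k P \<inter> F = {}" unfolding P_def F_def by auto
  have finP: "finite P" "finite F" using fin unfolding P_def F_def by auto
  have "(\<Sum>x\<in>Pi\<^sub>E V D. g x * h x * (\<Prod>v\<in>V-{k}. f v x))
      = (\<Sum>x\<in>Pi\<^sub>E (insert k P \<union> F) D. (g x * h x * (\<Prod>v\<in>P. f v x)) * (\<Prod>v\<in>F. f v x))"
    unfolding Vk using PF finP by (subst V) (simp add: prod.union_disjoint mult_ac)
  also have "\<dots> = (\<Sum>x\<in>Pi\<^sub>E (insert k P) D. g x * h x * (\<Prod>v\<in>P. f v x))"
  proof (rule marg[where r = r])
    show "finite F" by (fact finP)
    show "insert k P \<inter> F = {}" by (fact PF)
    show "inj_on r F" using inj unfolding F_def by (auto intro: inj_on_subset)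
    show "g (x(v := w)) * h (x(v := w)) * (\<Prod>u\<in>P. f u (x(v := w))) = g x * h x * (\<Prod>u\<in>P. f u x)"
      if "v \<in> F" for x v w
      using that gd hd fd unfolding F_def P_def by (auto intro!: prod.cong)
    show "f u (x(v := w)) = f u x" if "u \<in> F" "v \<in> F" "r u < r v" for x u v w
      using that fd unfolding F_def by auto
    show "(\<Sum>w\<in>D v. f v (x(v := w))) = 1" if "v \<in> F" for x v
      using that norm unfolding F_def by auto
  qed
  also have "\<dots> = (\<Sum>x\<in>Pi\<^sub>E P D. \<Sum>w\<in>D k. g (x(k:=w)) * h (x(k:=w)) * (\<Prod>v\<in>P. f v (x(k:=w))))"
    by (rule sum_PiE_insert) (simp add: P_def)
  also have "\<dots> = (\<Sum>x\<in>Pi\<^sub>E P D. g x * (\<Prod>v\<in>P. f v x) * (\<Sum>w\<in>D k. h (x(k:=w))))"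
  proof (rule sum.cong[OF refl])
    fix x
    have "g (x(k:=w)) * h (x(k:=w)) * (\<Prod>v\<in>P. f v (x(k:=w))) = g x * (\<Prod>v\<in>P. f v x) * h (x(k:=w))" for w
      using gd[OF kV] fd kV unfolding P_def by (auto intro!: prod.cong)
    then have "(\<Sum>w\<in>D k. g (x(k:=w)) * h (x(k:=w)) * (\<Prod>v\<in>P. f v (x(k:=w))))
        = (\<Sum>w\<in>D k. g x * (\<Prod>v\<in>P. f v x) * h (x(k:=w)))"
      by (intro sum.cong) auto
    then show "(\<Sum>w\<in>D k. g (x(k:=w)) * h (x(k:=w)) * (\<Prod>v\<in>P. f v (x(k:=w))))
        = g x * (\<Prod>v\<in>P. f v x) * (\<Sum>w\<in>D k. h (x(k:=w)))"
      by (simp add: sum_distrib_left)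
  qed
  also have "\<dots> = 0" using hz by simp
  finally show ?thesis .
qed




datatype var = VC nat | VS nat nat nat | VA nat nat nat

definition csX :: "(var \<Rightarrow> 'c + 's + 'a) \<Rightarrow> nat \<Rightarrow> 'c" where
  "csX x m = projl (x (VC m))"
definition ssX :: "(var \<Rightarrow> 'c + 's + 'a) \<Rightarrow> nat \<Rightarrow> nat \<Rightarrow> nat \<Rightarrow> 's" where
  "ssX x b m t = projl (projr (x (VS b m t)))"
definition asX :: "(var \<Rightarrow> 'c + 's + 'a) \<Rightarrow> nat \<Rightarrow> nat \<Rightarrow> nat \<Rightarrow> 'a" where
  "asX x b m t = projr (projr (x (VA b m t)))"

fun Dm :: "var \<Rightarrow> ('c + 's + 'a) set" where
  "Dm (VC m) = range Inl"
| "Dm (VS b m t) = range (\<lambda>s. Inr (Inl s))"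
| "Dm (VA b m t) = range (\<lambda>a. Inr (Inr a))"

definition Vs :: "nat \<Rightarrow> nat \<Rightarrow> nat \<Rightarrow> var set" where
  "Vs B M T = VC ` {..<M} \<union> (\<lambda>(b,m,t). VS b m t) ` ({..<B} \<times> {..<M} \<times> {..T})
     \<union> (\<lambda>(b,m,t). VA b m t) ` ({..<B} \<times> {..<M} \<times> {..<T})"

lemma Vs_simps[simp]:
  "VC m \<in> Vs B M T \<longleftrightarrow> m < M"
  "VS b m t \<in> Vs B M T \<longleftrightarrow> b < B \<and> m < M \<and> t \<le> T"
  "VA b m t \<in> Vs B M T \<longleftrightarrow> b < B \<and> m < M \<and> t < T"
  by (auto simp: Vs_def image_iff)

lemma finite_Vs[simp]: "finite (Vs B M T)"
  by (simp add: Vs_def)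

fun fac :: "nat \<Rightarrow> nat \<Rightarrow> 'c pmf \<Rightarrow> ('c \<Rightarrow> ('s list \<times> 'a list) list \<Rightarrow> 'c pmf) \<Rightarrow> ('c \<Rightarrow> 's pmf)
   \<Rightarrow> ('c \<Rightarrow> 's \<Rightarrow> 'a \<Rightarrow> 's pmf) \<Rightarrow> ('s \<Rightarrow> 'o) \<Rightarrow> ('p \<Rightarrow> 'o list \<Rightarrow> 'a pmf) \<Rightarrow> 'p
   \<Rightarrow> var \<Rightarrow> (var \<Rightarrow> 'c + 's + 'a) \<Rightarrow> real" where
  "fac B T initC U reset K obs pol p (VC m) x =
     (if m = 0 then pmf initC (csX x 0)
      else pmf (U (csX x (m-1)) (batch_data B T (ssX x) (asX x) (m-1))) (csX x m))"
| "fac B T initC U reset K obs pol p (VS b m t) x =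
     (if t = 0 then pmf (reset (csX x m)) (ssX x b m 0)
      else pmf (K (csX x m) (ssX x b m (t-1)) (asX x b m (t-1))) (ssX x b m t))"
| "fac B T initC U reset K obs pol p (VA b m t) x =
     pmf (pol p (ego_hist T obs (ssX x) b (m*T+t))) (asX x b m t)"

lemma traj_prob_fac:
  assumes "0 < M" "0 < T"
  shows "traj_prob B M T initC U reset K obs pol p (csX x, ssX x, asX x)
       = (\<Prod>v\<in>Vs B M T. fac B T initC U reset K obs pol p v x)"
proof -
  let ?f = "fac B T initC U reset K obs pol p"
  let ?C = "VC ` {..<M}"
  let ?S = "(\<lambda>(b,m,t). VS b m t) ` ({..<B} \<times> {..<M} \<times> {..T})"
  let ?A = "(\<lambda>(b,m,t). VA b m t) ` ({..<B} \<times> {..<M} \<times> {..<T})"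
  have split: "(\<Prod>v\<in>Vs B M T. ?f v x) = (\<Prod>v\<in>?C. ?f v x) * (\<Prod>v\<in>?S. ?f v x) * (\<Prod>v\<in>?A. ?f v x)"
  proof -
    have d1: "(?C \<union> ?S) \<inter> ?A = {}" "?C \<inter> ?S = {}" by auto
    have "(\<Prod>v\<in>Vs B M T. ?f v x) = (\<Prod>v\<in>(?C \<union> ?S) \<union> ?A. ?f v x)" by (simp add: Vs_def)
    also have "\<dots> = (\<Prod>v\<in>?C \<union> ?S. ?f v x) * (\<Prod>v\<in>?A. ?f v x)"
      by (rule prod.union_disjoint) (use d1 in auto)
    also have "(\<Prod>v\<in>?C \<union> ?S. ?f v x) = (\<Prod>v\<in>?C. ?f v x) * (\<Prod>v\<in>?S. ?f v x)"
      by (rule prod.union_disjoint) (use d1 in auto)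
    finally show ?thesis .
  qed
  have PC: "(\<Prod>v\<in>?C. ?f v x) = pmf initC (csX x 0) *
      (\<Prod>m\<in>{1..<M}. pmf (U (csX x (m - 1)) (batch_data B T (ssX x) (asX x) (m - 1))) (csX x m))"
  proof -
    have eq1: "(\<Prod>v\<in>?C. ?f v x) = (\<Prod>m<M. ?f (VC m) x)"
      by (subst prod.reindex) (auto simp: inj_on_def)
    have eq2: "{..<M} = insert 0 {1..<M}" using assms by auto
    have eq3: "(\<Prod>m<M. ?f (VC m) x) = ?f (VC 0) x * (\<Prod>m\<in>{1..<M}. ?f (VC m) x)"
      unfolding eq2 by simp
    have eq4: "(\<Prod>m\<in>{1..<M}. ?f (VC m) x) =
      (\<Prod>m\<in>{1..<M}. pmf (U (csX x (m - 1)) (batch_data B T (ssX x) (asX x) (m - 1))) (csX x m))"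
      by (intro prod.cong) auto
    show ?thesis unfolding eq1 eq3 eq4 by simp
  qed
  have PS: "(\<Prod>v\<in>?S. ?f v x) = (\<Prod>b<B. \<Prod>m<M. pmf (reset (csX x m)) (ssX x b m 0) *
      (\<Prod>t<T. pmf (K (csX x m) (ssX x b m t) (asX x b m t)) (ssX x b m (Suc t))))"
  proof -
    have "(\<Prod>v\<in>?S. ?f v x) = (\<Prod>b<B. \<Prod>m<M. \<Prod>t\<le>T. ?f (VS b m t) x)"
      by (subst prod.reindex) (auto simp: inj_on_def prod.cartesian_product split_def)
    also have "\<dots> = (\<Prod>b<B. \<Prod>m<M. pmf (reset (csX x m)) (ssX x b m 0) *
      (\<Prod>t<T. pmf (K (csX x m) (ssX x b m t) (asX x b m t)) (ssX x b m (Suc t))))"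
      by (simp add: prod.atMost_shift)
    finally show ?thesis .
  qed
  have PA: "(\<Prod>v\<in>?A. ?f v x) = (\<Prod>b<B. \<Prod>m<M. \<Prod>t<T.
       pmf (pol p (ego_hist T obs (ssX x) b (m*T+t))) (asX x b m t))"
    by (subst prod.reindex) (auto simp: inj_on_def prod.cartesian_product split_def)
  show ?thesis
    unfolding split PC PS PA traj_prob_def
    by (simp add: prod.distrib mult_ac)
qed


definition dec :: "nat \<Rightarrow> nat \<Rightarrow> nat \<Rightarrow> (var \<Rightarrow> 'c + 's + 'a) \<Rightarrow> ('c,'s,'a) btraj" where
  "dec B M T x = ((\<lambda>m\<in>{..<M}. csX x m), (\<lambda>b\<in>{..<B}. \<lambda>m\<in>{..<M}. \<lambda>t\<in>{..T}. ssX x b m t),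
      (\<lambda>b\<in>{..<B}. \<lambda>m\<in>{..<M}. \<lambda>t\<in>{..<T}. asX x b m t))"

definition enc :: "nat \<Rightarrow> nat \<Rightarrow> nat \<Rightarrow> ('c,'s,'a) btraj \<Rightarrow> var \<Rightarrow> 'c + 's + 'a" where
  "enc B M T \<tau> = (\<lambda>v. case \<tau> of (cs, ss, as) \<Rightarrow> (case v of
      VC m \<Rightarrow> if m < M then Inl (cs m) else undefined
    | VS b m t \<Rightarrow> if b < B \<and> m < M \<and> t \<le> T then Inr (Inl (ss b m t)) else undefined
    | VA b m t \<Rightarrow> if b < B \<and> m < M \<and> t < T then Inr (Inr (as b m t)) else undefined))"

lemma dec_enc:
  assumes "\<tau> \<in> btrajs B M T"
  shows "dec B M T (enc B M T \<tau>) = \<tau>"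
proof -
  obtain cs ss as where t: "\<tau> = (cs, ss, as)" by (cases \<tau>) auto
  from assms have cs: "cs \<in> Pi\<^sub>E {..<M} (\<lambda>_. UNIV)"
    and ss: "ss \<in> Pi\<^sub>E {..<B} (\<lambda>_. Pi\<^sub>E {..<M} (\<lambda>_. Pi\<^sub>E {..T} (\<lambda>_. UNIV)))"
    and as: "as \<in> Pi\<^sub>E {..<B} (\<lambda>_. Pi\<^sub>E {..<M} (\<lambda>_. Pi\<^sub>E {..<T} (\<lambda>_. UNIV)))"
    unfolding t btrajs_def by auto
  have 1: "(\<lambda>m\<in>{..<M}. csX (enc B M T \<tau>) m) = cs"
    using cs by (auto simp: t enc_def csX_def PiE_def extensional_def)
  have 2: "(\<lambda>b\<in>{..<B}. \<lambda>m\<in>{..<M}. \<lambda>t\<in>{..T}. ssX (enc B M T \<tau>) b m t) = ss"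
  proof (intro ext)
    fix b m i
    show "(\<lambda>b\<in>{..<B}. \<lambda>m\<in>{..<M}. \<lambda>t\<in>{..T}. ssX (enc B M T \<tau>) b m t) b m i = ss b m i"
    proof -
      have a1: "ss b = undefined" if "\<not> b < B" for b using PiE_arb[OF ss] that by auto
      have a2: "ss b m = undefined" if "b < B" "\<not> m < M" for b m
        using PiE_arb[OF PiE_mem[OF ss]] that by auto
      have a3: "ss b m i = undefined" if "b < B" "m < M" "\<not> i \<le> T" for b m i
        using PiE_arb[OF PiE_mem[OF PiE_mem[OF ss]]] that by auto
      show ?thesis
      using a1 a2 a3 by (cases "b < B"; cases "m < M"; cases "i \<le> T")
        (auto simp: t enc_def ssX_def)
    qed
  qed
  have 3: "(\<lambda>b\<in>{..<B}. \<lambda>m\<in>{..<M}. \<lambda>t\<in>{..<T}. asX (enc B M T \<tau>) b m t) = as"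
  proof (intro ext)
    fix b m i
    show "(\<lambda>b\<in>{..<B}. \<lambda>m\<in>{..<M}. \<lambda>t\<in>{..<T}. asX (enc B M T \<tau>) b m t) b m i = as b m i"
    proof -
      have a1: "as b = undefined" if "\<not> b < B" for b using PiE_arb[OF as] that by auto
      have a2: "as b m = undefined" if "b < B" "\<not> m < M" for b m
        using PiE_arb[OF PiE_mem[OF as]] that by auto
      have a3: "as b m i = undefined" if "b < B" "m < M" "\<not> i < T" for b m i
        using PiE_arb[OF PiE_mem[OF PiE_mem[OF as]]] that by auto
      show ?thesis
      using a1 a2 a3 by (cases "b < B"; cases "m < M"; cases "i < T")
        (auto simp: t enc_def asX_def)
    qed
  qed
  show ?thesis unfolding dec_def 1 2 3 by (simp add: t)
qed

lemma enc_PiE: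
  "enc B M T \<tau> \<in> Pi\<^sub>E (Vs B M T) Dm"
proof -
  obtain cs ss as where t: "\<tau> = (cs, ss, as)" by (cases \<tau>) auto
  show ?thesis
    unfolding PiE_def extensional_def Pi_def
  proof (intro CollectI IntI allI impI)
    fix v show "v \<in> Vs B M T \<Longrightarrow> enc B M T \<tau> v \<in> Dm v"
      by (cases v) (auto simp: t enc_def)
    fix v show "v \<notin> Vs B M T \<Longrightarrow> enc B M T \<tau> v = undefined"
      by (cases v) (auto simp: t enc_def)
  qed
qed

lemma enc_dec:
  assumes "x \<in> Pi\<^sub>E (Vs B M T) Dm"
  shows "enc B M T (dec B M T x) = x"
proof
  fix v
  show "enc B M T (dec B M T x) v = x v"
  proof (cases "v \<in> Vs B M T")
    case True
    then have "x v \<in> Dm v" using assms by auto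
    then show ?thesis using True
      by (cases v) (auto simp: enc_def dec_def csX_def ssX_def asX_def)
  next
    case False
    then have "x v = undefined" using assms by auto
    then show ?thesis using False
      by (cases v) (auto simp: enc_def dec_def)
  qed
qed

lemma dec_btrajs: "dec B M T x \<in> btrajs B M T"
  unfolding dec_def btrajs_def by auto

lemma sum_btrajs:
  "(\<Sum>\<tau>\<in>btrajs B M T. F \<tau>) = (\<Sum>x\<in>Pi\<^sub>E (Vs B M T) Dm. F (dec B M T x))"
  by (rule sum.reindex_bij_witness[where i = "dec B M T" and j = "enc B M T"])
    (auto simp: dec_enc enc_dec enc_PiE dec_btrajs)


lemma div_lt_M: "(k::nat) < M * T \<Longrightarrow> k div T < M"
  by (metis less_mult_imp_div_less mult.commute)

lemma mod_lt_T: "(k::nat) < M * T \<Longrightarrow> k mod T < T"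
  by (cases "T = 0") auto

lemma mT_lt: "t < T \<Longrightarrow> m < M \<Longrightarrow> m*T+t < M*(T::nat)"
proof -
  assume a: "t < T" "m < M"
  have "m*T+t < (m+1)*T" using a by simp
  also have "\<dots> \<le> M*T" using a by (intro mult_le_mono1) simp
  finally show ?thesis .
qed

lemma eh_cong:
  assumes "l < M * T" "b < B" "\<forall>b<B. \<forall>m<M. \<forall>t\<le>T. ss b m t = ss' b m t"
  shows "ego_hist T obs ss b l = ego_hist T obs ss' b l"
  unfolding ego_hist_def
proof (rule map_cong[OF refl])
  fix k assume "k \<in> set [0..<Suc l]"
  then have k: "k < M * T" using assms(1) by auto
  have "k div T < M" "k mod T \<le> T" using div_lt_M[OF k] mod_lt_T[OF k] by auto
  then show "obs (ss b (k div T) (k mod T)) = obs (ss' b (k div T) (k mod T))"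
    using assms(2,3) by simp
qed

lemma ea_cong:
  assumes "l < M * T" "b < B" "\<forall>b<B. \<forall>m<M. \<forall>t<T. as b m t = as' b m t"
  shows "ego_act T as b l = ego_act T as' b l"
proof -
  have "l div T < M" "l mod T < T" using div_lt_M[OF assms(1)] mod_lt_T[OF assms(1)] by auto
  then show ?thesis unfolding ego_act_def using assms(2,3) by simp
qed

lemma lr_cong:
  assumes "l < M * T" "b < B" "\<forall>b<B. \<forall>m<M. \<forall>t\<le>T. ss b m t = ss' b m t"
     "\<forall>b<B. \<forall>m<M. \<forall>t<T. as b m t = as' b m t"
  shows "long_rew T rew ss as b l = long_rew T rew ss' as' b l"
proof -
  have h: "l div T < M" "l mod T < T" using div_lt_M[OF assms(1)] mod_lt_T[OF assms(1)] by auto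
  have "ss b (l div T) (l mod T) = ss' b (l div T) (l mod T)"
       "ss b (l div T) (Suc (l mod T)) = ss' b (l div T) (Suc (l mod T))"
       "as b (l div T) (l mod T) = as' b (l div T) (l mod T)"
    using h assms(2,3,4) by auto
  then show ?thesis unfolding long_rew_def by simp
qed


fun rk :: "nat \<Rightarrow> nat \<Rightarrow> var \<Rightarrow> rkey" where
  "rk B b0 (VC m) = RK m 0 0 0"
| "rk B b0 (VS b m t) = RK m 1 (if b = b0 then B else b) (2*t)"
| "rk B b0 (VA b m t) = RK m 1 (if b = b0 then B else b) (2*t+1)"

lemma parity_ne[simp]: "(2*(a::nat) = Suc (2*b)) = False" "(Suc (2*b) = 2*(a::nat)) = False"
  by presburger+

lemma inj_rk: "inj_on (rk B b0) (Vs B M T)"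
proof (rule inj_onI)
  fix u v assume "u \<in> Vs B M T" "v \<in> Vs B M T" "rk B b0 u = rk B b0 v"
  then show "u = v"
    by (cases u; cases v) (auto split: if_splits)
qed

lemma csX_upd[simp]:
  "csX (x(VC m := w)) = (csX x)(m := projl w)"
  "csX (x(VS b m t := w)) = csX x"
  "csX (x(VA b m t := w)) = csX x"
  by (simp_all add: csX_def fun_eq_iff)

lemma ssX_upd[simp]:
  "ssX (x(VC m := w)) = ssX x"
  "ssX (x(VA b m t := w)) = ssX x"
  "ssX (x(VS b m t := w)) = (\<lambda>b' m' t'. if b' = b \<and> m' = m \<and> t' = t then projl (projr w) else ssX x b' m' t')"
  by (simp_all add: ssX_def fun_eq_iff)

lemma asX_upd[simp]:
  "asX (x(VC m := w)) = asX x"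
  "asX (x(VS b m t := w)) = asX x"
  "asX (x(VA b m t := w)) = (\<lambda>b' m' t'. if b' = b \<and> m' = m \<and> t' = t then projr (projr w) else asX x b' m' t')"
  by (simp_all add: asX_def fun_eq_iff)

lemma sum_pmf_UNIV: "(\<Sum>c\<in>(UNIV::'c::finite set). pmf P c) = 1"
  by (rule sum_pmf_eq_1) auto

lemma sum_Dm:
  "(\<Sum>w\<in>Dm (VC m). f w) = (\<Sum>c\<in>UNIV. f (Inl c))"
  "(\<Sum>w\<in>Dm (VS b m t). f w) = (\<Sum>s\<in>UNIV. f (Inr (Inl s)))"
  "(\<Sum>w\<in>Dm (VA b m t). f w) = (\<Sum>a\<in>UNIV. f (Inr (Inr a)))"
proof -
  show "(\<Sum>w\<in>Dm (VC m). f w) = (\<Sum>c\<in>UNIV. f (Inl c))"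
    by (simp only: Dm.simps, subst sum.reindex) (auto simp: inj_on_def)
  show "(\<Sum>w\<in>Dm (VS b m t). f w) = (\<Sum>s\<in>UNIV. f (Inr (Inl s)))"
    by (simp only: Dm.simps, subst sum.reindex) (auto simp: inj_on_def)
  show "(\<Sum>w\<in>Dm (VA b m t). f w) = (\<Sum>a\<in>UNIV. f (Inr (Inr a)))"
    by (simp only: Dm.simps, subst sum.reindex) (auto simp: inj_on_def)
qed

lemma minus_one_eq[simp]: "((m::nat) - Suc 0 = m) = (m = 0)" by arith

lemma fac_norm:
  fixes x :: "var \<Rightarrow> 'c::finite + 's::finite + 'a::finite"
  assumes "v \<in> Vs B M T"
  shows "(\<Sum>w\<in>Dm v. fac B T initC U reset K obs pol p v (x(v:=w))) = 1"
proof (cases v)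
  case (VC m)
  then show ?thesis unfolding VC sum_Dm fac.simps csX_upd ssX_upd asX_upd
    by (cases "m = 0") (simp_all add: sum_pmf_UNIV)
next
  case (VS b m t)
  then show ?thesis unfolding VS sum_Dm fac.simps csX_upd ssX_upd asX_upd
    by (cases "t = 0") (simp_all add: sum_pmf_UNIV)
next
  case (VA b m t)
  then show ?thesis unfolding VA sum_Dm fac.simps csX_upd ssX_upd asX_upd
    by (cases "t = 0") (simp_all add: sum_pmf_UNIV)
qed

lemma hist_pos:
  fixes k l T :: nat
  assumes "k \<le> l"
  shows "k div T < l div T \<or> (k div T = l div T \<and> k mod T \<le> l mod T)"
proof -
  have "k div T \<le> l div T" using assms by (rule div_le_mono)
  moreover have "k mod T \<le> l mod T" if "k div T = l div T"
  proof -
    have "k div T * T + k mod T \<le> l div T * T + l mod T" using assms by simp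
    moreover have "k div T * T = l div T * T" using that by simp
    ultimately show ?thesis by linarith
  qed
  ultimately show ?thesis by (auto simp: order_le_less)
qed

lemma before_pos:
  fixes k l T :: nat
  assumes "k < l"
  shows "k div T < l div T \<or> (k div T = l div T \<and> k mod T < l mod T)"
proof -
  have "k div T \<le> l div T" using assms by (intro div_le_mono) simp
  moreover have "k mod T < l mod T" if "k div T = l div T"
  proof -
    have "k div T * T + k mod T < l div T * T + l mod T" using assms by simp
    moreover have "k div T * T = l div T * T" using that by simp
    ultimately show ?thesis by linarith
  qed
  ultimately show ?thesis by (auto simp: order_le_less)
qed

lemma mT_div: "t < (T::nat) \<Longrightarrow> (m*T+t) div T = m" "t < (T::nat) \<Longrightarrow> (m*T+t) mod T = t"
  by auto

lemma hist_rank: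
  assumes "k \<le> l"
  shows "rk B b0 (VS b (k div T) (k mod T)) < rk B b0 (VA b (l div T) (l mod T))"
  using hist_pos[OF assms, of T] by auto

lemma eh_dep:
  assumes "\<And>k. k \<le> l \<Longrightarrow> ssX x b (k div T) (k mod T) = ssX y b (k div T) (k mod T)"
  shows "ego_hist T obs (ssX x) b l = ego_hist T obs (ssX y) b l"
  unfolding ego_hist_def using assms by (auto intro!: map_cong)

lemma fac_dep:
  assumes "v \<in> Vs B M T" and eq: "\<And>z. rk B b0 z < rk B b0 v \<Longrightarrow> x z = y z" and "x v = y v"
  shows "fac B T initC U reset K obs pol p v x = fac B T initC U reset K obs pol p v y"
proof (cases v)
  case (VC m)
  show ?thesis
  proof (cases "m = 0")
    case True then show ?thesis using VC assms(3) by (simp add: csX_def)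
  next
    case False
    have "batch_data B T (ssX x) (asX x) (m-1) = batch_data B T (ssX y) (asX y) (m-1)"
      using eq False unfolding VC batch_data_def ssX_def asX_def by (auto intro!: map_cong)
    moreover have "csX x (m-1) = csX y (m-1)" using eq False unfolding VC csX_def by auto
    ultimately show ?thesis using VC assms(3) False by (simp add: csX_def)
  qed
next
  case (VS b m t)
  have "csX x m = csX y m" using eq unfolding VS csX_def by auto
  moreover have "t > 0 \<Longrightarrow> ssX x b m (t-1) = ssX y b m (t-1)" using eq unfolding VS ssX_def by auto
  moreover have "t > 0 \<Longrightarrow> asX x b m (t-1) = asX y b m (t-1)" using eq unfolding VS asX_def by auto
  moreover have "ssX x b m t = ssX y b m t" using assms(3) unfolding VS ssX_def by auto
  ultimately show ?thesis using VS by auto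
next
  case (VA b m t)
  then have t: "t < T" using assms(1) by simp
  have "ego_hist T obs (ssX x) b (m*T+t) = ego_hist T obs (ssX y) b (m*T+t)"
  proof (rule eh_dep)
    fix k assume "k \<le> m*T+t"
    from hist_rank[OF this, where B=B and b0=b0 and b=b and T=T] have "rk B b0 (VS b (k div T) (k mod T)) < rk B b0 v"
      using VA mT_div[OF t] by simp
    then show "ssX x b (k div T) (k mod T) = ssX y b (k div T) (k mod T)" using eq unfolding ssX_def by auto
  qed
  moreover have "asX x b m t = asX y b m t" using assms(3) unfolding VA asX_def by auto
  ultimately show ?thesis using VA by simp
qed

lemma Dpol_sum0:
  fixes Dpol :: "'p::real_normed_vector \<Rightarrow> 'o list \<Rightarrow> 'a::finite \<Rightarrow> 'p \<Rightarrow> real"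
  assumes diff: "\<And>x h a. ((\<lambda>y. pmf (pol y h) a) has_derivative Dpol x h a) (at x)"
  shows "(\<Sum>a\<in>UNIV. Dpol q h a d) = 0"
proof -
  have "((\<lambda>y. \<Sum>a\<in>UNIV. pmf (pol y h) a) has_derivative (\<lambda>d. \<Sum>a\<in>UNIV. Dpol q h a d)) (at q)"
    by (intro has_derivative_sum diff)
  moreover have "(\<lambda>y. \<Sum>a\<in>UNIV. pmf (pol y h) a) = (\<lambda>y. 1)" by (simp add: sum_pmf_UNIV)
  ultimately have "((\<lambda>y. 1::real) has_derivative (\<lambda>d. \<Sum>a\<in>UNIV. Dpol q h a d)) (at q)" by simp
  from has_derivative_unique[OF this has_derivative_const]
  show ?thesis by (metis)
qed

lemma Dpol_zero:
  fixes Dpol :: "'p::real_normed_vector \<Rightarrow> 'o list \<Rightarrow> 'a::finite \<Rightarrow> 'p \<Rightarrow> real"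
  assumes diff: "\<And>x h a. ((\<lambda>y. pmf (pol y h) a) has_derivative Dpol x h a) (at x)"
    and z: "pmf (pol q h) a = 0"
  shows "Dpol q h a d = 0"
proof -
  have "Dpol q h a = (\<lambda>h. 0)"
    by (rule has_derivative_local_min[OF diff]) (simp add: z always_eventually)
  then show ?thesis by simp
qed


lemma traj_prob_cong:
  assumes "0 < M" "\<forall>m<M. cs m = cs' m" "\<forall>b<B. \<forall>m<M. \<forall>t\<le>T. ss b m t = ss' b m t"
     "\<forall>b<B. \<forall>m<M. \<forall>t<T. as b m t = as' b m t"
  shows "traj_prob B M T initC U reset K obs pol p (cs, ss, as) = traj_prob B M T initC U reset K obs pol p (cs', ss', as')"
proof -
  have bd: "batch_data B T ss as m = batch_data B T ss' as' m" if "m < M" for m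
    using assms that by (auto simp: batch_data_def intro!: map_cong)
  have eh: "ego_hist T obs ss b (m*T+t) = ego_hist T obs ss' b (m*T+t)" if "b<B" "m<M" "t<T" for b m t
  proof (rule eh_cong[OF _ that(1) assms(3)])
    have "m*T+t < (m+1)*T" using that by simp
    also have "\<dots> \<le> M*T" using that by (intro mult_le_mono1) simp
    finally show "m * T + t < M * T" .
  qed
  have p1: "(\<Prod>m\<in>{1..<M}. pmf (U (cs (m - 1)) (batch_data B T ss as (m - 1))) (cs m))
     = (\<Prod>m\<in>{1..<M}. pmf (U (cs' (m - 1)) (batch_data B T ss' as' (m - 1))) (cs' m))"
    using assms bd by (intro prod.cong) auto
  have p2: "(\<Prod>b<B. \<Prod>m<M. pmf (reset (cs m)) (ss b m 0) *
        (\<Prod>t<T. pmf (pol p (ego_hist T obs ss b (m * T + t))) (as b m t) *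
                 pmf (K (cs m) (ss b m t) (as b m t)) (ss b m (Suc t))))
      = (\<Prod>b<B. \<Prod>m<M. pmf (reset (cs' m)) (ss' b m 0) *
        (\<Prod>t<T. pmf (pol p (ego_hist T obs ss' b (m * T + t))) (as' b m t) *
                 pmf (K (cs' m) (ss' b m t) (as' b m t)) (ss' b m (Suc t))))"
    using assms eh by (intro prod.cong refl arg_cong2[where f = times]) (auto simp: Suc_leI less_imp_le)
  show ?thesis unfolding traj_prob_def using p1 p2 assms by simp
qed

lemma rew_rank:
  fixes l l' T :: nat
  assumes "b' < B" "0 < T"
    and nd: "\<not> ((b' = b \<and> l \<le> l' \<and> l' < (l div T + 1) * T) \<or> (l div T + 1) * T \<le> l')"
  shows "rk B b (VS b' (l' div T) (l' mod T)) < rk B b (VA b (l div T) (l mod T))"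
    "rk B b (VA b' (l' div T) (l' mod T)) < rk B b (VA b (l div T) (l mod T))"
    "rk B b (VS b' (l' div T) (Suc (l' mod T))) < rk B b (VA b (l div T) (l mod T))"
proof -
  have lt: "l' < (l div T + 1) * T" using nd by auto
  have A: "l' div T \<le> l div T"
    using less_mult_imp_div_less[OF lt] by simp
  have "(l' div T < l div T) \<or> (l' div T = l div T \<and> (if b' = b then l' mod T < l mod T else b' < B))"
  proof (cases "b' = b")
    case True
    then have "l' < l" using nd by auto
    then show ?thesis using before_pos[of l' l T] True by auto
  next
    case False
    then show ?thesis using A assms(1) by auto
  qed
  then show "rk B b (VS b' (l' div T) (l' mod T)) < rk B b (VA b (l div T) (l mod T))"
    "rk B b (VA b' (l' div T) (l' mod T)) < rk B b (VA b (l div T) (l mod T))"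
    "rk B b (VS b' (l' div T) (Suc (l' mod T))) < rk B b (VA b (l div T) (l mod T))"
    by (auto split: if_splits)
qed

lemma Rw_dep:
  assumes "x (VS b' (l' div T) (l' mod T)) = y (VS b' (l' div T) (l' mod T))"
    "x (VS b' (l' div T) (Suc (l' mod T))) = y (VS b' (l' div T) (Suc (l' mod T)))"
    "x (VA b' (l' div T) (l' mod T)) = y (VA b' (l' div T) (l' mod T))"
  shows "long_rew T rew (ssX x) (asX x) b' l' = long_rew T rew (ssX y) (asX y) b' l'"
  using assms by (simp add: long_rew_def ssX_def asX_def)

lemma dec_agree:
  assumes "dec B M T x = (cs, ss, as)"
  shows "\<forall>m<M. cs m = csX x m" "\<forall>b<B. \<forall>m<M. \<forall>t\<le>T. ss b m t = ssX x b m t"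
    "\<forall>b<B. \<forall>m<M. \<forall>t<T. as b m t = asX x b m t"
  using assms by (auto simp: dec_def)

context
  fixes B M T :: nat
    and initC :: "'c::finite pmf"
    and U :: "'c \<Rightarrow> ('s::finite list \<times> 'a::finite list) list \<Rightarrow> 'c pmf"
    and reset :: "'c \<Rightarrow> 's pmf"
    and K :: "'c \<Rightarrow> 's \<Rightarrow> 'a \<Rightarrow> 's pmf"
    and obs :: "'s \<Rightarrow> 'o::finite"
    and rew :: "'s \<Rightarrow> 'a \<Rightarrow> 's \<Rightarrow> real"
    and pol :: "'p::real_normed_vector \<Rightarrow> 'o list \<Rightarrow> 'a pmf"
    and Dpol :: "'p \<Rightarrow> 'o list \<Rightarrow> 'a \<Rightarrow> 'p \<Rightarrow> real"
    and \<phi> :: 'p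
  assumes B0: "0 < B" and M0: "0 < M" and T0: "0 < T"
    and diff: "\<And>x h a. ((\<lambda>y. pmf (pol y h) a) has_derivative Dpol x h a) (at x)"
begin

definition Rt :: "(var \<Rightarrow> 'c + 's + 'a) \<Rightarrow> real" where
  "Rt x = (1 / real B) * (\<Sum>b<B. \<Sum>l<M * T. long_rew T rew (ssX x) (asX x) b l)"

abbreviation "F p v x \<equiv> fac B T initC U reset K obs pol p v x"

lemma traj_dec: "traj_prob B M T initC U reset K obs pol p (dec B M T x) = (\<Prod>v\<in>Vs B M T. F p v x)"
proof -
  obtain cs ss as where d: "dec B M T x = (cs, ss, as)" by (metis prod_cases3)
  show ?thesis unfolding d
    by (subst traj_prob_cong[OF M0 dec_agree[OF d]]) (rule traj_prob_fac[OF M0 T0])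
qed

lemma Jbar_eq: "Jbar B M T initC U reset K obs rew pol = (\<lambda>p. \<Sum>x\<in>Pi\<^sub>E (Vs B M T) Dm. (\<Prod>v\<in>Vs B M T. F p v x) * Rt x)"
proof
  fix p
  show "Jbar B M T initC U reset K obs rew pol p = (\<Sum>x\<in>Pi\<^sub>E (Vs B M T) Dm. (\<Prod>v\<in>Vs B M T. F p v x) * Rt x)"
    unfolding Jbar_def sum_btrajs
  proof (rule sum.cong[OF refl])
    fix x :: "var \<Rightarrow> 'c + 's + 'a"
    obtain cs ss as where d: "dec B M T x = (cs, ss, as)" by (metis prod_cases3)
    have "(1 / real B) * (\<Sum>b<B. \<Sum>l<M * T. long_rew T rew ss as b l) = Rt x"
      unfolding Rt_def using lr_cong[OF _ _ dec_agree(2,3)[OF d]] by (auto intro!: sum.cong)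
    then show "traj_prob B M T initC U reset K obs pol p (dec B M T x) *
          (case dec B M T x of (cs, ss, as) \<Rightarrow> 1 / real B * (\<Sum>b<B. \<Sum>l<M * T. long_rew T rew ss as b l))
        = (\<Prod>v\<in>Vs B M T. F p v x) * Rt x"
      using traj_dec[of p x] d by simp
  qed
qed

definition facD :: "var \<Rightarrow> (var \<Rightarrow> 'c + 's + 'a) \<Rightarrow> 'p \<Rightarrow> real" where
  "facD v x = (case v of VA b m t \<Rightarrow> Dpol \<phi> (ego_hist T obs (ssX x) b (m*T+t)) (asX x b m t) | _ \<Rightarrow> (\<lambda>_. 0))"

lemma fac_deriv: "((\<lambda>p. F p v x) has_derivative facD v x) (at \<phi>)"
  by (cases v) (simp_all add: facD_def diff)

lemma Jbar_deriv:
  "(Jbar B M T initC U reset K obs rew pol has_derivative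
     (\<lambda>d. \<Sum>x\<in>Pi\<^sub>E (Vs B M T) Dm. (\<Sum>v\<in>Vs B M T. facD v x d * (\<Prod>u\<in>Vs B M T - {v}. F \<phi> u x)) * Rt x)) (at \<phi>)"
  unfolding Jbar_eq
  by (intro has_derivative_sum has_derivative_mult_left has_derivative_prod fac_deriv)


abbreviation "Rw x b l \<equiv> long_rew T rew (ssX x) (asX x) b l"

definition G :: "nat \<Rightarrow> nat \<Rightarrow> (var \<Rightarrow> 'c + 's + 'a) \<Rightarrow> 'p \<Rightarrow> real" where
  "G b l x d = Dpol \<phi> (ego_hist T obs (ssX x) b l) (asX x b (l div T) (l mod T)) d *
     (\<Prod>v\<in>Vs B M T - {VA b (l div T) (l mod T)}. F \<phi> v x)"

definition Down :: "nat \<Rightarrow> nat \<Rightarrow> (var \<Rightarrow> 'c + 's + 'a) \<Rightarrow> real" where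
  "Down b l x = (1 / real B) * (\<Sum>l'\<in>{l..<(l div T + 1) * T}. Rw x b l')
      + (1 / real B) * (\<Sum>b'<B. \<Sum>l'\<in>{(l div T + 1) * T..<M * T}. Rw x b' l')"

definition ND :: "nat \<Rightarrow> nat \<Rightarrow> nat \<Rightarrow> nat \<Rightarrow> bool" where
  "ND b l b' l' = (\<not> ((b' = b \<and> l \<le> l' \<and> l' < (l div T + 1) * T) \<or> (l div T + 1) * T \<le> l'))"

definition Non :: "nat \<Rightarrow> nat \<Rightarrow> (var \<Rightarrow> 'c + 's + 'a) \<Rightarrow> real" where
  "Non b l x = (1 / real B) * (\<Sum>b'<B. \<Sum>l'<M * T. if ND b l b' l' then Rw x b' l' else 0)"

lemma S1: "(\<Sum>v\<in>Vs B M T. facD v x d * (\<Prod>u\<in>Vs B M T - {v}. F \<phi> u x)) = (\<Sum>b<B. \<Sum>l<M*T. G b l x d)"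
proof -
  let ?A = "(\<lambda>(b,l). VA b (l div T) (l mod T)) ` ({..<B} \<times> {..<M*T})"
  let ?g = "\<lambda>v. facD v x d * (\<Prod>u\<in>Vs B M T - {v}. F \<phi> u x)"
  have AV: "?A \<subseteq> Vs B M T" using div_lt_M mod_lt_T by auto
  have z: "?g v = 0" if "v \<in> Vs B M T - ?A" for v
  proof (cases v)
    case (VA b m t)
    then have "b < B" "m < M" "t < T" using that by auto
    then have "m*T+t < M*T" "(m*T+t) div T = m" "(m*T+t) mod T = t"
      using mT_div[of t T m] mT_lt by auto
    then have "v \<in> ?A" using VA \<open>b < B\<close> unfolding image_iff by (intro bexI[of _ "(b, m*T+t)"]) auto
    then show ?thesis using that by simp
  qed (auto simp: facD_def)
  have "(\<Sum>v\<in>Vs B M T. ?g v) = (\<Sum>v\<in>?A. ?g v)"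
    by (rule sum.mono_neutral_right[OF finite_Vs AV]) (use z in blast)
  also have "\<dots> = (\<Sum>p\<in>{..<B} \<times> {..<M*T}. ?g ((\<lambda>(b,l). VA b (l div T) (l mod T)) p))"
  proof (rule sum.reindex[unfolded comp_def])
    show "inj_on (\<lambda>(b,l). VA b (l div T) (l mod T)) ({..<B} \<times> {..<M*T})"
    proof (rule inj_onI, clarsimp)
      fix l l' :: nat assume "l div T = l' div T" "l mod T = l' mod T"
      then show "l = l'" by (metis div_mult_mod_eq)
    qed
  qed
  also have "\<dots> = (\<Sum>b<B. \<Sum>l<M*T. ?g (VA b (l div T) (l mod T)))"
    by (simp add: sum.cartesian_product split_def)
  also have "\<dots> = (\<Sum>b<B. \<Sum>l<M*T. G b l x d)"
    by (simp add: facD_def G_def)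
  finally show ?thesis .
qed

lemma S2:
  assumes "b < B" "l < M*T"
  shows "(\<Prod>v\<in>Vs B M T. F \<phi> v x) * (Dpol \<phi> (ego_hist T obs (ssX x) b l) (asX x b (l div T) (l mod T)) d
      / pmf (pol \<phi> (ego_hist T obs (ssX x) b l)) (asX x b (l div T) (l mod T))) = G b l x d"
proof -
  let ?k = "VA b (l div T) (l mod T)"
  let ?pi = "pmf (pol \<phi> (ego_hist T obs (ssX x) b l)) (asX x b (l div T) (l mod T))"
  let ?D = "Dpol \<phi> (ego_hist T obs (ssX x) b l) (asX x b (l div T) (l mod T)) d"
  have kV: "?k \<in> Vs B M T" using assms div_lt_M mod_lt_T by auto
  have "(\<Prod>v\<in>Vs B M T. F \<phi> v x) = F \<phi> ?k x * (\<Prod>v\<in>Vs B M T - {?k}. F \<phi> v x)"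
    by (rule prod.remove[OF finite_Vs kV])
  also have "F \<phi> ?k x = ?pi" by simp
  finally have P: "(\<Prod>v\<in>Vs B M T. F \<phi> v x) = ?pi * (\<Prod>v\<in>Vs B M T - {?k}. F \<phi> v x)" .
  show ?thesis
  proof (cases "?pi = 0")
    case True
    then have "?D = 0" by (rule Dpol_zero[OF diff])
    then show ?thesis using True unfolding G_def by simp
  next
    case False
    then show ?thesis unfolding P G_def by (simp add: field_simps)
  qed
qed

lemma S3:
  assumes "b < B" "l < M*T"
  shows "Rt x = Down b l x + Non b l x"
proof -
  define E where "E = (l div T + 1) * T"
  have EM: "E \<le> M*T" unfolding E_def using div_lt_M[OF assms(2)] by (intro mult_le_mono1) simp
  have pw: "Rw x b' l' = (if b' = b then (if l \<le> l' \<and> l' < E then Rw x b' l' else 0) else 0)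
      + (if E \<le> l' then Rw x b' l' else 0) + (if ND b l b' l' then Rw x b' l' else 0)" for b' l'
    unfolding ND_def E_def by auto
  have f1: "(\<Sum>b'<B. \<Sum>l'<M*T. (if b' = b then (if l \<le> l' \<and> l' < E then Rw x b' l' else 0) else 0))
      = (\<Sum>l'\<in>{l..<E}. Rw x b l')"
  proof -
    have "(\<Sum>b'<B. \<Sum>l'<M*T. (if b' = b then (if l \<le> l' \<and> l' < E then Rw x b' l' else 0) else 0))
       = (\<Sum>b'<B. if b' = b then (\<Sum>l'<M*T. if l \<le> l' \<and> l' < E then Rw x b l' else 0) else 0)"
      by (intro sum.cong) auto
    also have "\<dots> = (\<Sum>l'<M*T. if l \<le> l' \<and> l' < E then Rw x b l' else 0)"
      using assms(1) by simp
    also have "\<dots> = sum (\<lambda>l'. Rw x b l') ({..<M*T} \<inter> {l..<E})"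
      by (simp add: sum.inter_restrict)
    also have "{..<M*T} \<inter> {l..<E} = {l..<E}" using EM by auto
    finally show ?thesis .
  qed
  have f2: "(\<Sum>b'<B. \<Sum>l'<M*T. (if E \<le> l' then Rw x b' l' else 0))
      = (\<Sum>b'<B. \<Sum>l'\<in>{E..<M*T}. Rw x b' l')"
  proof (rule sum.cong[OF refl])
    fix b'
    have "(\<Sum>l'<M*T. (if E \<le> l' then Rw x b' l' else 0)) = sum (\<lambda>l'. Rw x b' l') ({..<M*T} \<inter> {E..<M*T})"
      by (simp add: sum.inter_restrict)
    also have "{..<M*T} \<inter> {E..<M*T} = {E..<M*T}" by auto
    finally show "(\<Sum>l'<M*T. (if E \<le> l' then Rw x b' l' else 0)) = (\<Sum>l'\<in>{E..<M*T}. Rw x b' l')" .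
  qed
  have "(\<Sum>b'<B. \<Sum>l'<M * T. Rw x b' l') =
      (\<Sum>b'<B. \<Sum>l'<M*T. (if b' = b then (if l \<le> l' \<and> l' < E then Rw x b' l' else 0) else 0))
    + (\<Sum>b'<B. \<Sum>l'<M*T. (if E \<le> l' then Rw x b' l' else 0))
    + (\<Sum>b'<B. \<Sum>l'<M*T. if ND b l b' l' then Rw x b' l' else 0)"
    by (subst pw) (simp add: sum.distrib)
  then show ?thesis unfolding Rt_def Down_def Non_def f1 f2 E_def[symmetric]
    by (simp add: algebra_simps)
qed


lemma zero_term:
  assumes "b < B" "l < M*T" "b' < B" "l' < M*T" "ND b l b' l'"
  shows "(\<Sum>x\<in>Pi\<^sub>E (Vs B M T) Dm. G b l x d * Rw x b' l') = 0"
proof -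
  let ?k = "VA b (l div T) (l mod T)"
  let ?h = "\<lambda>x :: var \<Rightarrow> 'c + 's + 'a. Dpol \<phi> (ego_hist T obs (ssX x) b l) (asX x b (l div T) (l mod T)) d"
  let ?g = "\<lambda>x :: var \<Rightarrow> 'c + 's + 'a. Rw x b' l'"
  have kV: "?k \<in> Vs B M T" using assms div_lt_M mod_lt_T by auto
  have nd: "\<not> ((b' = b \<and> l \<le> l' \<and> l' < (l div T + 1) * T) \<or> (l div T + 1) * T \<le> l')"
    using assms(5) unfolding ND_def .
  note rr = rew_rank[OF assms(3) T0 nd]
  have "(\<Sum>x\<in>Pi\<^sub>E (Vs B M T) Dm. ?g x * ?h x * (\<Prod>v\<in>Vs B M T - {?k}. F \<phi> v x)) = 0"
  proof (rule zero_lemma[where r = "rk B b"])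
    show "finite (Vs B M T)" by simp
    show "?k \<in> Vs B M T" by (fact kV)
    show "inj_on (rk B b) (Vs B M T)" by (rule inj_rk)
    show "F \<phi> u (x(v := w)) = F \<phi> u x"
      if "u \<in> Vs B M T" "v \<in> Vs B M T" "rk B b u < rk B b v" for x :: "var \<Rightarrow> 'c + 's + 'a" and u v w
    proof (rule fac_dep[OF that(1)])
      show "(x(v := w)) z = x z" if "rk B b z < rk B b u" for z
        using that \<open>rk B b u < rk B b v\<close> by (metis fun_upd_other less_asym less_trans)
      show "(x(v := w)) u = x u" using \<open>rk B b u < rk B b v\<close> by auto
    qed
    show "(\<Sum>w\<in>Dm v. F \<phi> v (x(v := w))) = 1" if "v \<in> Vs B M T" for x :: "var \<Rightarrow> 'c + 's + 'a" and v
      by (rule fac_norm[OF that])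
    show "?g (x(v := w)) = ?g x" if "v \<in> Vs B M T" "rk B b ?k \<le> rk B b v" for x :: "var \<Rightarrow> 'c + 's + 'a" and v w
      by (rule Rw_dep) (use rr that in \<open>auto dest: less_le_trans\<close>)
    show "?h (x(v := w)) = ?h x" if "v \<in> Vs B M T" "rk B b ?k < rk B b v" for x :: "var \<Rightarrow> 'c + 's + 'a" and v w
    proof -
      have "ego_hist T obs (ssX (x(v := w))) b l = ego_hist T obs (ssX x) b l"
      proof (rule eh_dep)
        fix k' assume "k' \<le> l"
        have "rk B b (VS b (k' div T) (k' mod T)) < rk B b (VA b (l div T) (l mod T))"
          by (rule hist_rank) fact
        then have "rk B b (VS b (k' div T) (k' mod T)) < rk B b v" using that(2) by (rule less_trans)
        then show "ssX (x(v := w)) b (k' div T) (k' mod T) = ssX x b (k' div T) (k' mod T)"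
          unfolding ssX_def by auto
      qed
      moreover have "asX (x(v := w)) b (l div T) (l mod T) = asX x b (l div T) (l mod T)"
        using that(2) unfolding asX_def by auto
      ultimately show ?thesis by simp
    qed
    show "(\<Sum>w\<in>Dm ?k. ?h (x(?k := w))) = 0" for x :: "var \<Rightarrow> 'c + 's + 'a"
      unfolding sum_Dm apply simp by (rule Dpol_sum0[OF diff])
  qed
  then show ?thesis unfolding G_def by (simp add: mult_ac)
qed

lemma S4:
  assumes "b < B" "l < M*T"
  shows "(\<Sum>x\<in>Pi\<^sub>E (Vs B M T) Dm. G b l x d * Non b l x) = 0"
proof -
  let ?S = "Pi\<^sub>E (Vs B M T) Dm"
  have "(\<Sum>x\<in>?S. G b l x d * Non b l x)
      = (\<Sum>x\<in>?S. \<Sum>b'<B. \<Sum>l'<M*T. (1 / real B) * (if ND b l b' l' then G b l x d * Rw x b' l' else 0))"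
    unfolding Non_def sum_distrib_left by (intro sum.cong refl) auto
  also have "\<dots> = (\<Sum>b'<B. \<Sum>x\<in>?S. \<Sum>l'<M*T. (1 / real B) * (if ND b l b' l' then G b l x d * Rw x b' l' else 0))"
    by (rule sum.swap)
  also have "\<dots> = (\<Sum>b'<B. \<Sum>l'<M*T. \<Sum>x\<in>?S. (1 / real B) * (if ND b l b' l' then G b l x d * Rw x b' l' else 0))"
    by (intro sum.cong refl sum.swap)
  also have "\<dots> = 0"
  proof (rule sum.neutral, rule ballI, rule sum.neutral, rule ballI)
    fix b' l' assume "b' \<in> {..<B}" "l' \<in> {..<M*T}"
    then show "(\<Sum>x\<in>?S. (1 / real B) * (if ND b l b' l' then G b l x d * Rw x b' l' else 0)) = 0"
      using zero_term[OF assms, of b' l'] by (cases "ND b l b' l'") (simp_all add: sum_divide_distrib[symmetric])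
  qed
  finally show ?thesis .
qed


lemma E_le: "l < M*T \<Longrightarrow> (l div T + 1) * T \<le> M * T"
  using div_lt_M[of l M T] by (intro mult_le_mono1) simp

lemma main_eq:
  "(\<Sum>\<tau>\<in>btrajs B M T. traj_prob B M T initC U reset K obs pol \<phi> \<tau> *
              (case \<tau> of (cs, ss, as) \<Rightarrow>
                 \<Sum>b<B. \<Sum>l<M * T.
                   (Dpol \<phi> (ego_hist T obs ss b l) (ego_act T as b l) d
                      / pmf (pol \<phi> (ego_hist T obs ss b l)) (ego_act T as b l)) *
                   ((1 / real B) * (\<Sum>l'\<in>{l..<(l div T + 1) * T}. long_rew T rew ss as b l')
                    + (1 / real B) * (\<Sum>b'<B. \<Sum>l'\<in>{(l div T + 1) * T..<M * T}.
                                          long_rew T rew ss as b' l'))))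
   = (\<Sum>x\<in>Pi\<^sub>E (Vs B M T) Dm. (\<Sum>v\<in>Vs B M T. facD v x d * (\<Prod>u\<in>Vs B M T - {v}. F \<phi> u x)) * Rt x)"
  (is "?L = ?R")
proof -
  let ?S = "Pi\<^sub>E (Vs B M T) Dm"
  have L: "?L = (\<Sum>x\<in>?S. \<Sum>b<B. \<Sum>l<M*T. G b l x d * Down b l x)"
    unfolding sum_btrajs
  proof (rule sum.cong[OF refl])
    fix x :: "var \<Rightarrow> 'c + 's + 'a"
    obtain cs ss as where dd: "dec B M T x = (cs, ss, as)" by (metis prod_cases3)
    note ag = dec_agree[OF dd]
    have inner: "(Dpol \<phi> (ego_hist T obs ss b l) (ego_act T as b l) d
                      / pmf (pol \<phi> (ego_hist T obs ss b l)) (ego_act T as b l)) *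
                   ((1 / real B) * (\<Sum>l'\<in>{l..<(l div T + 1) * T}. long_rew T rew ss as b l')
                    + (1 / real B) * (\<Sum>b'<B. \<Sum>l'\<in>{(l div T + 1) * T..<M * T}.
                                          long_rew T rew ss as b' l'))
        = (Dpol \<phi> (ego_hist T obs (ssX x) b l) (asX x b (l div T) (l mod T)) d
           / pmf (pol \<phi> (ego_hist T obs (ssX x) b l)) (asX x b (l div T) (l mod T))) * Down b l x"
      if bl: "b < B" "l < M*T" for b l
    proof -
      have eh: "ego_hist T obs ss b l = ego_hist T obs (ssX x) b l" by (rule eh_cong[OF bl(2,1) ag(2)])
      have ea: "ego_act T as b l = asX x b (l div T) (l mod T)"
        using ea_cong[OF bl(2,1) ag(3)] by (simp add: ego_act_def)
      have E: "(l div T + 1) * T \<le> M * T" by (rule E_le[OF bl(2)])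
      have s1: "(\<Sum>l'\<in>{l..<(l div T + 1) * T}. long_rew T rew ss as b l') = (\<Sum>l'\<in>{l..<(l div T + 1) * T}. Rw x b l')"
        using E by (intro sum.cong refl lr_cong[OF _ bl(1) ag(2,3)]) auto
      have s2: "(\<Sum>b'<B. \<Sum>l'\<in>{(l div T + 1) * T..<M * T}. long_rew T rew ss as b' l')
          = (\<Sum>b'<B. \<Sum>l'\<in>{(l div T + 1) * T..<M * T}. Rw x b' l')"
        by (intro sum.cong refl lr_cong[OF _ _ ag(2,3)]) auto
      show ?thesis unfolding eh ea s1 s2 Down_def ..
    qed
    have "traj_prob B M T initC U reset K obs pol \<phi> (dec B M T x) *
         (case dec B M T x of (cs, ss, as) \<Rightarrow>
                 \<Sum>b<B. \<Sum>l<M * T.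
                   (Dpol \<phi> (ego_hist T obs ss b l) (ego_act T as b l) d
                      / pmf (pol \<phi> (ego_hist T obs ss b l)) (ego_act T as b l)) *
                   ((1 / real B) * (\<Sum>l'\<in>{l..<(l div T + 1) * T}. long_rew T rew ss as b l')
                    + (1 / real B) * (\<Sum>b'<B. \<Sum>l'\<in>{(l div T + 1) * T..<M * T}.
                                          long_rew T rew ss as b' l')))
       = (\<Prod>v\<in>Vs B M T. F \<phi> v x) * (\<Sum>b<B. \<Sum>l<M * T.
            (Dpol \<phi> (ego_hist T obs (ssX x) b l) (asX x b (l div T) (l mod T)) d
           / pmf (pol \<phi> (ego_hist T obs (ssX x) b l)) (asX x b (l div T) (l mod T))) * Down b l x)"
    proof -
      have tp: "traj_prob B M T initC U reset K obs pol \<phi> (cs, ss, as) = (\<Prod>v\<in>Vs B M T. F \<phi> v x)"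
        using traj_dec[of \<phi> x] dd by simp
      have se: "(\<Sum>b<B. \<Sum>l<M * T.
                   (Dpol \<phi> (ego_hist T obs ss b l) (ego_act T as b l) d
                      / pmf (pol \<phi> (ego_hist T obs ss b l)) (ego_act T as b l)) *
                   ((1 / real B) * (\<Sum>l'\<in>{l..<(l div T + 1) * T}. long_rew T rew ss as b l')
                    + (1 / real B) * (\<Sum>b'<B. \<Sum>l'\<in>{(l div T + 1) * T..<M * T}.
                                          long_rew T rew ss as b' l')))
         = (\<Sum>b<B. \<Sum>l<M * T.
            (Dpol \<phi> (ego_hist T obs (ssX x) b l) (asX x b (l div T) (l mod T)) d
           / pmf (pol \<phi> (ego_hist T obs (ssX x) b l)) (asX x b (l div T) (l mod T))) * Down b l x)"
        by (intro sum.cong refl, rule inner) auto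
      show ?thesis unfolding dd prod.case se tp ..
    qed
    also have "\<dots> = (\<Sum>b<B. \<Sum>l<M * T. G b l x d * Down b l x)"
      unfolding sum_distrib_left
    proof (intro sum.cong refl)
      fix b l assume "b \<in> {..<B}" "l \<in> {..<M*T}"
      then show "(\<Prod>v\<in>Vs B M T. F \<phi> v x) * ((Dpol \<phi> (ego_hist T obs (ssX x) b l) (asX x b (l div T) (l mod T)) d
           / pmf (pol \<phi> (ego_hist T obs (ssX x) b l)) (asX x b (l div T) (l mod T))) * Down b l x)
           = G b l x d * Down b l x"
        using S2[of b l x d] by (subst mult.assoc[symmetric]) simp
    qed
    finally show "traj_prob B M T initC U reset K obs pol \<phi> (dec B M T x) *
         (case dec B M T x of (cs, ss, as) \<Rightarrow>
                 \<Sum>b<B. \<Sum>l<M * T.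
                   (Dpol \<phi> (ego_hist T obs ss b l) (ego_act T as b l) d
                      / pmf (pol \<phi> (ego_hist T obs ss b l)) (ego_act T as b l)) *
                   ((1 / real B) * (\<Sum>l'\<in>{l..<(l div T + 1) * T}. long_rew T rew ss as b l')
                    + (1 / real B) * (\<Sum>b'<B. \<Sum>l'\<in>{(l div T + 1) * T..<M * T}.
                                          long_rew T rew ss as b' l')))
       = (\<Sum>b<B. \<Sum>l<M * T. G b l x d * Down b l x)" .
  qed
  have "?R = (\<Sum>x\<in>?S. \<Sum>b<B. \<Sum>l<M*T. G b l x d * Down b l x + G b l x d * Non b l x)"
  proof (rule sum.cong[OF refl])
    fix x
    show "(\<Sum>v\<in>Vs B M T. facD v x d * (\<Prod>u\<in>Vs B M T - {v}. F \<phi> u x)) * Rt x =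
        (\<Sum>b<B. \<Sum>l<M*T. G b l x d * Down b l x + G b l x d * Non b l x)"
      unfolding S1 sum_distrib_right
      by (intro sum.cong refl) (simp add: S3 distrib_left)
  qed
  also have "\<dots> = (\<Sum>x\<in>?S. \<Sum>b<B. \<Sum>l<M*T. G b l x d * Down b l x)
       + (\<Sum>x\<in>?S. \<Sum>b<B. \<Sum>l<M*T. G b l x d * Non b l x)"
    by (simp add: sum.distrib)
  also have "(\<Sum>x\<in>?S. \<Sum>b<B. \<Sum>l<M*T. G b l x d * Non b l x)
      = (\<Sum>b<B. \<Sum>l<M*T. \<Sum>x\<in>?S. G b l x d * Non b l x)"
    by (subst sum.swap) (intro sum.cong refl sum.swap)
  also have "\<dots> = 0"
    by (rule sum.neutral, rule ballI, rule sum.neutral, rule ballI) (simp add: S4)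
  finally show ?thesis using L by simp
qed

lemma main:
  "(Jbar B M T initC U reset K obs rew pol has_derivative
           (\<lambda>d. \<Sum>\<tau>\<in>btrajs B M T. traj_prob B M T initC U reset K obs pol \<phi> \<tau> *
              (case \<tau> of (cs, ss, as) \<Rightarrow>
                 \<Sum>b<B. \<Sum>l<M * T.
                   (Dpol \<phi> (ego_hist T obs ss b l) (ego_act T as b l) d
                      / pmf (pol \<phi> (ego_hist T obs ss b l)) (ego_act T as b l)) *
                   ((1 / real B) * (\<Sum>l'\<in>{l..<(l div T + 1) * T}. long_rew T rew ss as b l')
                    + (1 / real B) * (\<Sum>b'<B. \<Sum>l'\<in>{(l div T + 1) * T..<M * T}.
                                          long_rew T rew ss as b' l')))))
         (at \<phi>)"
  unfolding main_eq by (rule Jbar_deriv)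

end


theorem theorem1:
  fixes B M T :: nat
    and initC :: "'c::finite pmf"
    and U :: "'c \<Rightarrow> ('s::finite list \<times> 'a::finite list) list \<Rightarrow> 'c pmf"
    and reset :: "'c \<Rightarrow> 's pmf"
    and K :: "'c \<Rightarrow> 's \<Rightarrow> 'a \<Rightarrow> 's pmf"
    and obs :: "'s \<Rightarrow> 'o::finite"
    and rew :: "'s \<Rightarrow> 'a \<Rightarrow> 's \<Rightarrow> real"
    and pol :: "'p::real_normed_vector \<Rightarrow> 'o list \<Rightarrow> 'a pmf"
    and Dpol :: "'p \<Rightarrow> 'o list \<Rightarrow> 'a \<Rightarrow> 'p \<Rightarrow> real"
    and \<phi> :: 'p
  assumes "0 < B" and "0 < M" and "0 < T"
    and diff: "\<And>x h a. ((\<lambda>y. pmf (pol y h) a) has_derivative Dpol x h a) (at x)"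
  shows "(Jbar B M T initC U reset K obs rew pol has_derivative
           (\<lambda>d. \<Sum>\<tau>\<in>btrajs B M T. traj_prob B M T initC U reset K obs pol \<phi> \<tau> *
              (case \<tau> of (cs, ss, as) \<Rightarrow>
                 \<Sum>b<B. \<Sum>l<M * T.
                   (Dpol \<phi> (ego_hist T obs ss b l) (ego_act T as b l) d
                      / pmf (pol \<phi> (ego_hist T obs ss b l)) (ego_act T as b l)) *
                   ((1 / real B) * (\<Sum>l'\<in>{l..<(l div T + 1) * T}. long_rew T rew ss as b l')
                    + (1 / real B) * (\<Sum>b'<B. \<Sum>l'\<in>{(l div T + 1) * T..<M * T}.
                                          long_rew T rew ss as b' l')))))
         (at \<phi>)"
    by (rule main[OF assms])

end
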